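(* Let $S$ take values in a finite set $\mathcal{S}$ with $P(s)>0$ for all $s$, and let $\mathbf{R}$ take values in a finite set $\mathcal{R}$, with joint distribution $P(s,\mathbf{r})$. Let $Q=(Q(\hat{\mathbf{r}}|\mathbf{r}))_{\mathbf{r},\hat{\mathbf{r}}\in\mathcal{R}}$ be a right stochastic matrix (rows and columns both indexed by $\mathcal{R}$ in the same order) that is idempotent ($Q^2=Q$) and has strictly positive diagonal, and let $\hat{\mathbf{R}}$ be the stochastic code with $P(\hat{\mathbf{r}}|s)=\sum_{\mathbf{r}}P(\mathbf{r}|s)Q(\hat{\mathbf{r}}|\mathbf{r})$. Suppose $g$ is a deterministic function such that $\bar{\mathbf{R}}=g(\hat{\mathbf{R}})$ satisfies $I(S;\bar{\mathbf{R}})=I(S;\hat{\mathbf{R}})$. Then $$\Delta I(\mathbf{R},\hat{\mathbf{R}})=\Delta I(\mathbf{R},\bar{\mathbf{R}})=\Delta I_D=\Delta I_{DL},\quad \Delta I(\mathbf{R},\hat{\mathbf{S}})=\Delta I_{LS},\quad \Delta I(\mathbf{R},\hat{S})=\Delta I_B,\quad \Delta A(\mathbf{R},\hat{\mathbf{R}})=\Delta A_B,$$ with all quantities as defined in the context.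
   Context: $I(S;X)=\sum_{s,x}P(s,x)\log\frac{P(s|x)}{P(s)}$ denotes mutual information, with conventions $0\log0=0$. For codes $X,Y$ taking values in $\mathcal{R}$, an optimal decoder constructed with $Y$ and operated on $X$ maps $x$ to $\arg\max_s P(S=s|Y=x)$ (ties broken by a fixed rule); its accuracy above chance is $A^{X}_{Y}=\sum_s P(S=s,\hat S=s)-\max_s P(s)$, where $\hat S$ is the decoder output when the input is $X$. Likewise the sorted list associated with $Y$ and operated on $X$ maps $x$ to the list of stimuli sorted in decreasing order of $P(S=s|Y=x)$ (fixed tie-breaking rule). Encoding-oriented measures: $\Delta I(\mathbf{R},\hat{\mathbf{R}})=I(S;\mathbf{R})-I(S;\hat{\mathbf{R}})$; $\Delta I(\mathbf{R},\bar{\mathbf{R}})=I(S;\mathbf{R})-I(S;\bar{\mathbf{R}})$; $\Delta I(\mathbf{R},\hat{\mathbf{S}})=I(S;\mathbf{R})-I(S;\hat{\mathbf{S}})$ where $\hat{\mathbf{S}}$ is the sorted list constructed with $\hat{\mathbf{R}}$ and operated on $\hat{\mathbf{R}}$; $\Delta I(\mathbf{R},\hat S)=I(S;\mathbf{R})-I(S;\hat S)$ where $\hat S$ is the optimal decoder output constructed with $\hat{\mathbf{R}}$ and operated on $\hat{\mathbf{R}}$; $\Delta A(\mathbf{R},\hat{\mathbf{R}})=A^{\mathbf{R}}_{\mathbf{R}}-A^{\hat{\mathbf{R}}}_{\hat{\mathbf{R}}}$. Decoding-oriented measures: $\Delta I_D=\sum_{s,\mathbf{r}}P(s,\mathbf{r})\ln\frac{P(s|\mathbf{r})}{P(S=s|\hat{\mathbf{R}}=\mathbf{r})}$;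 $\Delta I_{DL}=\min_{\theta\in\mathbb{R}}\sum_{s,\mathbf{r}}P(s,\mathbf{r})\ln\frac{P(s|\mathbf{r})}{P(s|\hat{\mathbf{R}}=\mathbf{r},\theta)}$, where $P(s|\hat{\mathbf{r}},\theta)$ is proportional (normalized over $s$) to: $P(s)$ if there exist $s',\bar{\mathbf{r}}$ with $P(\mathbf{R}=\bar{\mathbf{r}}|S=s')>P(\hat{\mathbf{R}}=\bar{\mathbf{r}}|S=s')=0$; $0$ if $P(\hat{\mathbf{R}}=\hat{\mathbf{r}}|S=s)=P(\mathbf{R}=\hat{\mathbf{r}}|S=s)=0$ holds for this $s$ but not for all stimuli; and $P(s)P(\hat{\mathbf{R}}=\hat{\mathbf{r}}|S=s)^{\theta}$ otherwise; $\Delta I_{LS}=I(S;\mathbf{R})-I(S;\mathbf{L})$ where $\mathbf{L}$ is the sorted list constructed with $\hat{\mathbf{R}}$ and operated on $\mathbf{R}$; $\Delta I_B=I(S;\mathbf{R})-I(S;\tilde S)$ where $\tilde S$ is the optimal decoder output constructed with $\hat{\mathbf{R}}$ and operated on $\mathbf{R}$; $\Delta A_B=A^{\mathbf{R}}_{\mathbf{R}}-A^{\mathbf{R}}_{\hat{\mathbf{R}}}$ (decoder constructed with $\hat{\mathbf{R}}$, operated on $\mathbf{R}$). *)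

theory Defs
  imports Complex_Main
begin

text \<open>A code X is represented by the joint distribution j s x = P(S=s, X=x)
 (j :: 's => 'x => real, 'x finite). Logarithms are natural, 0 log 0 = 0.
 Q r rh stands for Q(rh|r). Ties (in decoders and sorted lists) are broken by a fixed
 linear order on the stimuli: the smallest stimulus comes first.\<close>

definition mi_on :: "'c set \<Rightarrow> ('s::finite \<Rightarrow> 'c \<Rightarrow> real) \<Rightarrow> real" where
  "mi_on C j = (\<Sum>s\<in>UNIV. \<Sum>c\<in>C. if j s c = 0 then 0 else
      j s c * ln (j s c / ((\<Sum>c'\<in>C. j s c') * (\<Sum>s'\<in>UNIV. j s' c))))"

definition push :: "('s \<Rightarrow> 'x::finite \<Rightarrow> real) \<Rightarrow> ('x \<Rightarrow> 'c) \<Rightarrow> 's \<Rightarrow> 'c \<Rightarrow> real" where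
  "push j f s c = (\<Sum>x\<in>{x. f x = c}. j s x)"

definition margS :: "('s \<Rightarrow> 'x::finite \<Rightarrow> real) \<Rightarrow> 's \<Rightarrow> real" where
  "margS j s = (\<Sum>x\<in>UNIV. j s x)"

definition cond :: "('s::finite \<Rightarrow> 'x \<Rightarrow> real) \<Rightarrow> 's \<Rightarrow> 'x \<Rightarrow> real" where
  "cond j s x = j s x / (\<Sum>s'\<in>UNIV. j s' x)"

definition dec :: "('s::{finite,linorder} \<Rightarrow> 'x \<Rightarrow> real) \<Rightarrow> 'x \<Rightarrow> 's" where
  "dec j x = (LEAST s. \<forall>s'. cond j s' x \<le> cond j s x)"

text \<open>Sorted list constructed with the code whose joint is j (stable sort, so ties follow the order).\<close>
definition slist :: "('s::{finite,linorder} \<Rightarrow> 'x \<Rightarrow> real) \<Rightarrow> 'x \<Rightarrow> 's list" where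
  "slist j x = sort_key (\<lambda>s. - cond j s x) (sorted_list_of_set UNIV)"

definition acc :: "('s::finite \<Rightarrow> 'x::finite \<Rightarrow> real) \<Rightarrow> ('x \<Rightarrow> 's) \<Rightarrow> real" where
  "acc jX d = (\<Sum>s\<in>UNIV. push jX d s s) - Max (range (margS jX))"

definition phat :: "('s \<Rightarrow> 'r::finite \<Rightarrow> real) \<Rightarrow> ('r \<Rightarrow> 'r \<Rightarrow> real) \<Rightarrow> 's \<Rightarrow> 'r \<Rightarrow> real" where
  "phat p Q s rh = (\<Sum>r\<in>UNIV. p s r * Q r rh)"

definition dI_D :: "('s::finite \<Rightarrow> 'r::finite \<Rightarrow> real) \<Rightarrow> ('r \<Rightarrow> 'r \<Rightarrow> real) \<Rightarrow> real" where
  "dI_D p Q = (\<Sum>s\<in>UNIV. \<Sum>r\<in>UNIV. if p s r = 0 then 0 else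
      p s r * ln (cond p s r / cond (phat p Q) s r))"

definition dl_weight :: "('s::finite \<Rightarrow> 'r::finite \<Rightarrow> real) \<Rightarrow> ('r \<Rightarrow> 'r \<Rightarrow> real) \<Rightarrow> real \<Rightarrow> 'r \<Rightarrow> 's \<Rightarrow> real" where
  "dl_weight p Q \<theta> rh s =
     (let PR = (\<lambda>r s. p s r / margS p s);
          PRh = (\<lambda>r s. phat p Q s r / margS p s)
      in if (\<exists>s' rb. PR rb s' > PRh rb s' \<and> PRh rb s' = 0) then margS p s
         else if (PRh rh s = 0 \<and> PR rh s = 0) \<and> \<not> (\<forall>s'. PRh rh s' = 0 \<and> PR rh s' = 0) then 0
         else margS p s * (PRh rh s) powr \<theta>)"

definition dl_model :: "('s::finite \<Rightarrow> 'r::finite \<Rightarrow> real) \<Rightarrow> ('r \<Rightarrow> 'r \<Rightarrow> real) \<Rightarrow> real \<Rightarrow> 'r \<Rightarrow> 's \<Rightarrow> real" where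
  "dl_model p Q \<theta> rh s = dl_weight p Q \<theta> rh s / (\<Sum>s'\<in>UNIV. dl_weight p Q \<theta> rh s')"

definition dl_obj :: "('s::finite \<Rightarrow> 'r::finite \<Rightarrow> real) \<Rightarrow> ('r \<Rightarrow> 'r \<Rightarrow> real) \<Rightarrow> real \<Rightarrow> real" where
  "dl_obj p Q \<theta> = (\<Sum>s\<in>UNIV. \<Sum>r\<in>UNIV. if p s r = 0 then 0 else
      p s r * ln (cond p s r / dl_model p Q \<theta> r s))"

text \<open>Delta I_DL = min over theta (as an infimum; attainment is asserted in the theorem).\<close>
definition dI_DL :: "('s::finite \<Rightarrow> 'r::finite \<Rightarrow> real) \<Rightarrow> ('r \<Rightarrow> 'r \<Rightarrow> real) \<Rightarrow> real" where
  "dI_DL p Q = Inf (range (dl_obj p Q))"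

end

theory Submission
  imports Defs
begin


locale idemQ =
  fixes Q :: "'r::finite \<Rightarrow> 'r \<Rightarrow> real"
  assumes Q_nonneg: "\<And>r rh. 0 \<le> Q r rh"
    and Q_rows: "\<And>r. (\<Sum>rh\<in>UNIV. Q r rh) = 1"
    and Q_idem: "\<And>r rh. (\<Sum>r'\<in>UNIV. Q r r' * Q r' rh) = Q r rh"
    and Q_diag: "\<And>r. 0 < Q r r"
begin

lemma Qtrans: assumes "0 < Q a b" "0 < Q b c" shows "0 < Q a c"
proof -
  have "Q a b * Q b c \<le> (\<Sum>x\<in>UNIV. Q a x * Q x c)"
    by (rule member_le_sum[where f="\<lambda>x. Q a x * Q x c"]) (auto simp: Q_nonneg)
  moreover have "0 < Q a b * Q b c" using assms by simp
  ultimately show ?thesis using Q_idem[of a c] by simp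
qed

lemma Qsym: assumes "0 < Q r y" shows "0 < Q y r"
proof -
  define B where "B = {x. 0 < Q x r}"
  have out: "Q x z = 0" if "x \<notin> B" "z \<in> B" for x z
  proof (rule ccontr)
    assume "Q x z \<noteq> 0" then have "0 < Q x z" using Q_nonneg[of x z] by simp
    with that Qtrans[of x z r] show False by (auto simp: B_def)
  qed
  have inB: "(\<Sum>y\<in>B. Q x y) = 0" if "x \<notin> B" for x using out[OF that] by simp
  have "(\<Sum>y\<in>B. Q r y) = (\<Sum>y\<in>B. \<Sum>x\<in>UNIV. Q r x * Q x y)"
    using Q_idem by simp
  also have "\<dots> = (\<Sum>x\<in>UNIV. Q r x * (\<Sum>y\<in>B. Q x y))"
    by (subst sum.swap) (simp add: sum_distrib_left)
  also have "\<dots> = (\<Sum>x\<in>UNIV - B. Q r x * (\<Sum>y\<in>B. Q x y)) + (\<Sum>x\<in>B. Q r x * (\<Sum>y\<in>B. Q x y))"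
    by (rule sum.subset_diff) auto
  also have "\<dots> = (\<Sum>x\<in>B. Q r x * (\<Sum>y\<in>B. Q x y))" using inB by simp
  finally have eq: "(\<Sum>x\<in>B. Q r x * (1 - (\<Sum>y\<in>B. Q x y))) = 0"
    by (simp add: algebra_simps sum_subtractf)
  have le1: "(\<Sum>y\<in>B. Q x y) \<le> 1" for x
  proof -
    have "(\<Sum>y\<in>B. Q x y) \<le> (\<Sum>y\<in>UNIV. Q x y)" by (rule sum_mono2) (auto simp: Q_nonneg)
    then show ?thesis using Q_rows by simp
  qed
  have "\<forall>x\<in>B. Q r x * (1 - (\<Sum>y\<in>B. Q x y)) = 0"
    using sum_nonneg_eq_0_iff[of B "\<lambda>x. Q r x * (1 - (\<Sum>y\<in>B. Q x y))"] eq le1 Q_nonneg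
    by auto
  moreover have "r \<in> B" using Q_diag by (simp add: B_def)
  ultimately have "(\<Sum>y\<in>B. Q r y) = 1" using Q_diag[of r] by auto
  moreover have "(\<Sum>y\<in>UNIV. Q r y) = (\<Sum>y\<in>UNIV - B. Q r y) + (\<Sum>y\<in>B. Q r y)"
    by (rule sum.subset_diff) auto
  ultimately have "(\<Sum>y\<in>UNIV - B. Q r y) = 0" using Q_rows[of r] by simp
  hence "\<forall>y\<in>UNIV - B. Q r y = 0" using sum_nonneg_eq_0_iff[of "UNIV - B" "Q r"] Q_nonneg by auto
  hence "y \<in> B" using assms by force
  thus ?thesis by (simp add: B_def)
qed

lemma Qrow: assumes "0 < Q r y" shows "Q r c = Q y c"
proof -
  define C where "C = {x. 0 < Q r x}"
  have rC: "r \<in> C" using Q_diag by (simp add: C_def)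
  have yC: "y \<in> C" using assms by (simp add: C_def)
  define M where "M = Max ((\<lambda>x. Q x c) ` C)"
  have fin: "finite ((\<lambda>x. Q x c) ` C)" by simp
  have ne: "(\<lambda>x. Q x c) ` C \<noteq> {}" using rC by auto
  obtain x0 where x0: "x0 \<in> C" "Q x0 c = M" using Max_in[OF fin ne] unfolding M_def by auto
  have leM: "Q x c \<le> M" if "x \<in> C" for x using that fin unfolding M_def by auto
  have mem: "x \<in> C" if "0 < Q x0 x" for x
    using Qtrans[of r x0 x] x0 that by (auto simp: C_def)
  have mem2: "0 < Q x0 x" if "x \<in> C" for x
    using Qtrans[of x0 r x] Qsym[of r x0] x0 that by (auto simp: C_def)
  have "(\<Sum>x\<in>UNIV. Q x0 x * (M - Q x c)) = M * (\<Sum>x\<in>UNIV. Q x0 x) - (\<Sum>x\<in>UNIV. Q x0 x * Q x c)"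
    by (simp add: algebra_simps sum_subtractf sum_distrib_left)
  also have "\<dots> = 0" using Q_rows[of x0] Q_idem[of x0 c] x0 by simp
  finally have z: "(\<Sum>x\<in>UNIV. Q x0 x * (M - Q x c)) = 0" .
  have nn: "0 \<le> Q x0 x * (M - Q x c)" for x
  proof (cases "0 < Q x0 x")
    case True then show ?thesis using leM[OF mem[OF True]] by simp
  next
    case False then have "Q x0 x = 0" using Q_nonneg[of x0 x] by simp
    then show ?thesis by simp
  qed
  have all0: "\<forall>x. Q x0 x * (M - Q x c) = 0"
    using sum_nonneg_eq_0_iff[of UNIV "\<lambda>x. Q x0 x * (M - Q x c)"] z nn by auto
  have "Q x c = M" if "x \<in> C" for x using all0[rule_format, of x] mem2[OF that] by simp
  then show ?thesis using rC yC by simp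
qed

lemma Qrowf: "0 < Q r y \<Longrightarrow> Q r = Q y" using Qrow by blast

lemma Kinv: assumes "\<And>a b. Q a = Q b \<Longrightarrow> h a = h b"
  shows "(\<Sum>r\<in>UNIV. Q r' r * h r) = h r'"
proof -
  have "(\<Sum>r\<in>UNIV. Q r' r * h r) = (\<Sum>r\<in>UNIV. Q r' r * h r')"
  proof (rule sum.cong)
    fix r show "Q r' r * h r = Q r' r * h r'"
    proof (cases "0 < Q r' r")
      case True then show ?thesis using assms[OF Qrowf[OF True]] by simp
    next
      case False then have "Q r' r = 0" using Q_nonneg[of r' r] by simp
      then show ?thesis by simp
    qed
  qed simp
  also have "\<dots> = h r'" by (simp add: sum_distrib_right[symmetric] Q_rows)
  finally show ?thesis .
qed

lemma Qcol: "Q r' r = (if Q r' = Q r then Q r r else 0)"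
proof (cases "Q r' = Q r")
  case True then show ?thesis by simp
next
  case False
  have "\<not> 0 < Q r' r" using False Qrowf by blast
  then show ?thesis using False Q_nonneg[of r' r] by simp
qed

end



locale setup2 = idemQ Q for Q :: "'r::finite \<Rightarrow> 'r \<Rightarrow> real" +
  fixes p :: "'s::{finite,linorder} \<Rightarrow> 'r \<Rightarrow> real"
  assumes p_nonneg: "\<And>s r. 0 \<le> p s r"
    and p_sum: "(\<Sum>s\<in>UNIV. \<Sum>r\<in>UNIV. p s r) = 1"
    and pS_pos: "\<And>s. 0 < margS p s"
begin

definition W where "W s r = (\<Sum>r'\<in>UNIV. if Q r' = Q r then p s r' else 0)"

lemma W_inv: "Q a = Q b \<Longrightarrow> W s a = W s b" by (simp add: W_def)

lemma W_nonneg: "0 \<le> W s r" unfolding W_def by (rule sum_nonneg) (simp add: p_nonneg)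

lemma W_ge: "p s r \<le> W s r"
proof -
  have "(\<lambda>r'. if Q r' = Q r then p s r' else 0) r \<le> (\<Sum>r'\<in>UNIV. if Q r' = Q r then p s r' else 0)"
    by (rule member_le_sum) (auto simp: p_nonneg)
  then show ?thesis by (simp add: W_def)
qed

lemma phat_W: "phat p Q s r = W s r * Q r r"
proof -
  have "phat p Q s r = (\<Sum>r'\<in>UNIV. p s r' * (if Q r' = Q r then Q r r else 0))"
    unfolding phat_def by (subst Qcol) simp
  also have "\<dots> = (\<Sum>r'\<in>UNIV. (if Q r' = Q r then p s r' else 0) * Q r r)"
    by (rule sum.cong) auto
  also have "\<dots> = W s r * Q r r" by (simp add: W_def sum_distrib_right)
  finally show ?thesis .
qed

lemma ph_nonneg: "0 \<le> phat p Q s r" by (simp add: phat_W W_nonneg Q_nonneg)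

lemma ph_pos: "0 < p s r \<Longrightarrow> 0 < phat p Q s r"
  using W_ge[of s r] Q_diag[of r] by (simp add: phat_W)

lemma cond_ph: "cond (phat p Q) s r = W s r / (\<Sum>s'\<in>UNIV. W s' r)"
proof -
  have d: "Q r r \<noteq> 0" using Q_diag[of r] by simp
  have e: "(\<Sum>s'\<in>UNIV. phat p Q s' r) = (\<Sum>s'\<in>UNIV. W s' r) * Q r r"
    unfolding phat_W by (rule sum_distrib_right[symmetric])
  have "cond (phat p Q) s r = (W s r * Q r r) / ((\<Sum>s'\<in>UNIV. W s' r) * Q r r)"
    unfolding cond_def e by (simp only: phat_W)
  also have "\<dots> = W s r / (\<Sum>s'\<in>UNIV. W s' r)"
    using d by (rule mult_divide_mult_cancel_right)
  finally show ?thesis .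
qed

lemma cond_ph_inv: "Q a = Q b \<Longrightarrow> cond (phat p Q) s a = cond (phat p Q) s b"
proof -
  assume "Q a = Q b"
  then have "\<And>s. W s a = W s b" by (rule W_inv)
  then show ?thesis unfolding cond_ph by simp
qed

lemma T: assumes "\<And>a b. Q a = Q b \<Longrightarrow> h a = h b"
  shows "(\<Sum>r\<in>UNIV. p s r * h r) = (\<Sum>r\<in>UNIV. phat p Q s r * h r)"
proof -
  have "(\<Sum>r\<in>UNIV. phat p Q s r * h r) = (\<Sum>r\<in>UNIV. \<Sum>r'\<in>UNIV. p s r' * (Q r' r * h r))"
    unfolding phat_def sum_distrib_right by (simp only: mult.assoc)
  also have "\<dots> = (\<Sum>r'\<in>UNIV. p s r' * (\<Sum>r\<in>UNIV. Q r' r * h r))"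
    by (subst sum.swap) (simp add: sum_distrib_left)
  also have "\<dots> = (\<Sum>r'\<in>UNIV. p s r' * h r')" using Kinv[OF assms] by simp
  finally show ?thesis by simp
qed

lemma margS_ph: "margS (phat p Q) s = margS p s"
  using T[of "\<lambda>_. 1" s] by (simp add: margS_def)

lemma push_sum: "push j f s c = (\<Sum>x\<in>UNIV. j s x * (if f x = c then 1 else 0))"
proof -
  have "(\<Sum>x\<in>UNIV. j s x * (if f x = c then 1 else 0)) = (\<Sum>x\<in>UNIV. if f x = c then j s x else 0)"
    by (rule sum.cong) auto
  also have "\<dots> = sum (j s) {x\<in>UNIV. f x = c}" by (rule sum.inter_filter[symmetric]) simp
  finally show ?thesis unfolding push_def by simp
qed

lemma push_eq: assumes "\<And>a b. Q a = Q b \<Longrightarrow> f a = f b"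
  shows "push (phat p Q) f = push p f"
proof (intro ext)
  fix s c
  show "push (phat p Q) f s c = push p f s c"
    unfolding push_sum by (rule T[symmetric]) (auto dest: assms)
qed

lemma slist_inv: "Q a = Q b \<Longrightarrow> slist (phat p Q) a = slist (phat p Q) b"
proof -
  assume "Q a = Q b"
  then have "\<And>s. cond (phat p Q) s a = cond (phat p Q) s b" by (rule cond_ph_inv)
  then show ?thesis unfolding slist_def by simp
qed

lemma dec_inv: "Q a = Q b \<Longrightarrow> dec (phat p Q) a = dec (phat p Q) b"
proof -
  assume "Q a = Q b"
  then have "\<And>s. cond (phat p Q) s a = cond (phat p Q) s b" by (rule cond_ph_inv)
  then show ?thesis unfolding dec_def by simp
qed

end



context setup2 begin

lemma col_pos: "0 < p s r \<Longrightarrow> 0 < (\<Sum>s'\<in>UNIV. p s' r)"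
proof -
  assume a: "0 < p s r"
  have "p s r \<le> (\<Sum>s'\<in>UNIV. p s' r)" by (rule member_le_sum) (auto simp: p_nonneg)
  with a show ?thesis by simp
qed

lemma colh_pos: "0 < phat p Q s r \<Longrightarrow> 0 < (\<Sum>s'\<in>UNIV. phat p Q s' r)"
proof -
  assume a: "0 < phat p Q s r"
  have "phat p Q s r \<le> (\<Sum>s'\<in>UNIV. phat p Q s' r)" by (rule member_le_sum) (auto simp: ph_nonneg)
  with a show ?thesis by simp
qed

lemma ch_pos: "0 < phat p Q s r \<Longrightarrow> 0 < cond (phat p Q) s r"
  using colh_pos by (simp add: cond_def)

lemma cp_pos: "0 < p s r \<Longrightarrow> 0 < cond p s r"
  using col_pos by (simp add: cond_def)

definition L where "L s r = ln (cond (phat p Q) s r) - ln (margS p s)"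

lemma L_inv: "Q a = Q b \<Longrightarrow> L s a = L s b"
proof -
  assume "Q a = Q b"
  then have "cond (phat p Q) s a = cond (phat p Q) s b" by (rule cond_ph_inv)
  then show ?thesis by (simp add: L_def)
qed

lemma term_p: "(if p s r = 0 then 0 else p s r * ln (p s r / ((\<Sum>c'\<in>UNIV. p s c') * (\<Sum>s'\<in>UNIV. p s' r))))
   = (if p s r = 0 then 0 else p s r * ln (cond p s r / cond (phat p Q) s r)) + p s r * L s r"
proof (cases "p s r = 0")
  case True then show ?thesis by simp
next
  case False
  then have a: "0 < p s r" using p_nonneg[of s r] by simp
  have P: "0 < (\<Sum>c'\<in>UNIV. p s c')" using pS_pos[of s] by (simp add: margS_def)
  have c: "0 < (\<Sum>s'\<in>UNIV. p s' r)" using col_pos[OF a] .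
  have h: "0 < cond (phat p Q) s r" using ch_pos[OF ph_pos[OF a]] .
  have "ln (p s r / ((\<Sum>c'\<in>UNIV. p s c') * (\<Sum>s'\<in>UNIV. p s' r)))
      = ln (p s r) - (ln (\<Sum>c'\<in>UNIV. p s c') + ln (\<Sum>s'\<in>UNIV. p s' r))"
    using a P c by (simp add: ln_divide_pos ln_mult_pos)
  moreover have "ln (cond p s r / cond (phat p Q) s r) = ln (p s r) - ln (\<Sum>s'\<in>UNIV. p s' r) - ln (cond (phat p Q) s r)"
  proof -
    have cp: "0 < cond p s r" using cp_pos[OF a] .
    have "ln (cond p s r / cond (phat p Q) s r) = ln (cond p s r) - ln (cond (phat p Q) s r)"
      using cp h by (rule ln_divide_pos)
    moreover have "ln (cond p s r) = ln (p s r) - ln (\<Sum>s'\<in>UNIV. p s' r)"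
      unfolding cond_def using a c by (rule ln_divide_pos)
    ultimately show ?thesis by simp
  qed
  moreover have "L s r = ln (cond (phat p Q) s r) - ln (\<Sum>c'\<in>UNIV. p s c')"
    by (simp add: L_def margS_def)
  ultimately have "ln (p s r / ((\<Sum>c'\<in>UNIV. p s c') * (\<Sum>s'\<in>UNIV. p s' r))) = ln (cond p s r / cond (phat p Q) s r) + L s r"
    by linarith
  then show ?thesis using False by (simp add: distrib_left)
qed

lemma term_ph: "(if phat p Q s r = 0 then 0 else phat p Q s r * ln (phat p Q s r / ((\<Sum>c'\<in>UNIV. phat p Q s c') * (\<Sum>s'\<in>UNIV. phat p Q s' r))))
   = phat p Q s r * L s r"
proof (cases "phat p Q s r = 0")
  case True then show ?thesis by simp
next
  case False
  then have a: "0 < phat p Q s r" using ph_nonneg[of s r] by simp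
  have Pe: "(\<Sum>c'\<in>UNIV. phat p Q s c') = margS p s" using margS_ph[of s] by (simp add: margS_def)
  have P: "0 < margS p s" using pS_pos[of s] .
  have c: "0 < (\<Sum>s'\<in>UNIV. phat p Q s' r)" using colh_pos[OF a] .
  have "ln (phat p Q s r / ((\<Sum>c'\<in>UNIV. phat p Q s c') * (\<Sum>s'\<in>UNIV. phat p Q s' r)))
      = ln (phat p Q s r) - (ln (margS p s) + ln (\<Sum>s'\<in>UNIV. phat p Q s' r))"
    unfolding Pe using a P c by (simp add: ln_divide_pos ln_mult_pos)
  moreover have "L s r = ln (phat p Q s r) - ln (\<Sum>s'\<in>UNIV. phat p Q s' r) - ln (margS p s)"
    unfolding L_def cond_def using ln_divide_pos[OF a c] by simp
  ultimately have "ln (phat p Q s r / ((\<Sum>c'\<in>UNIV. phat p Q s c') * (\<Sum>s'\<in>UNIV. phat p Q s' r))) = L s r"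
    by linarith
  then show ?thesis using False by simp
qed

lemma mi_p: "mi_on UNIV p = dI_D p Q + (\<Sum>s\<in>UNIV. \<Sum>r\<in>UNIV. p s r * L s r)"
  unfolding mi_on_def dI_D_def term_p by (simp add: sum.distrib)

lemma mi_ph: "mi_on UNIV (phat p Q) = (\<Sum>s\<in>UNIV. \<Sum>r\<in>UNIV. phat p Q s r * L s r)"
  unfolding mi_on_def term_ph by simp

lemma dI_main: "mi_on UNIV p - mi_on UNIV (phat p Q) = dI_D p Q"
proof -
  have "(\<Sum>r\<in>UNIV. p s r * L s r) = (\<Sum>r\<in>UNIV. phat p Q s r * L s r)" for s
    by (rule T) (rule L_inv)
  then show ?thesis unfolding mi_p mi_ph by simp
qed

end



context setup2 begin

lemma dlw: "dl_weight p Q \<theta> rh s = margS p s * (phat p Q s rh / margS p s) powr \<theta>"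
proof -
  have nc: "\<not> (\<exists>s' rb. p s' rb / margS p s' > phat p Q s' rb / margS p s' \<and> phat p Q s' rb / margS p s' = 0)"
  proof
    assume "\<exists>s' rb. p s' rb / margS p s' > phat p Q s' rb / margS p s' \<and> phat p Q s' rb / margS p s' = 0"
    then obtain s' rb where h: "p s' rb / margS p s' > phat p Q s' rb / margS p s'" "phat p Q s' rb / margS p s' = 0"
      by blast
    have P: "0 < margS p s'" by (rule pS_pos)
    from h P have "0 < p s' rb" by (simp add: zero_less_divide_iff)
    then have "0 < phat p Q s' rb" by (rule ph_pos)
    with h(2) P show False by simp
  qed
  show ?thesis unfolding dl_weight_def Let_def using nc by auto
qed

definition V where "V \<theta> s r = margS p s * (W s r / margS p s) powr \<theta>"

lemma dlw_V: "dl_weight p Q \<theta> r s = V \<theta> s r * (Q r r) powr \<theta>"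
proof -
  have e: "phat p Q s r / margS p s = (W s r / margS p s) * Q r r" by (simp add: phat_W)
  have "dl_weight p Q \<theta> r s = margS p s * ((W s r / margS p s) * Q r r) powr \<theta>"
    unfolding dlw e ..
  also have "\<dots> = V \<theta> s r * (Q r r) powr \<theta>" unfolding V_def powr_mult by simp
  finally show ?thesis .
qed

lemma model_V: "dl_model p Q \<theta> r s = V \<theta> s r / (\<Sum>s'\<in>UNIV. V \<theta> s' r)"
proof -
  have d: "Q r r powr \<theta> \<noteq> 0" using Q_diag[of r] by simp
  have "dl_model p Q \<theta> r s = (V \<theta> s r * Q r r powr \<theta>) / ((\<Sum>s'\<in>UNIV. V \<theta> s' r) * Q r r powr \<theta>)"
    unfolding dl_model_def dlw_V sum_distrib_right ..
  also have "\<dots> = V \<theta> s r / (\<Sum>s'\<in>UNIV. V \<theta> s' r)"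
    using d by (rule mult_divide_mult_cancel_right)
  finally show ?thesis .
qed

lemma model_inv: "Q a = Q b \<Longrightarrow> dl_model p Q \<theta> a s = dl_model p Q \<theta> b s"
proof -
  assume "Q a = Q b"
  then have "\<And>s. W s a = W s b" by (rule W_inv)
  then show ?thesis unfolding model_V V_def by simp
qed

lemma w_nonneg: "0 \<le> dl_weight p Q \<theta> r s"
  unfolding dlw using pS_pos[of s] by simp

lemma model_pos: assumes "0 < p s r" shows "0 < dl_model p Q \<theta> r s"
proof -
  have ph: "0 < phat p Q s r" using ph_pos[OF assms] .
  have P: "0 < margS p s" by (rule pS_pos)
  have w: "0 < dl_weight p Q \<theta> r s" unfolding dlw using ph P by simp
  have "dl_weight p Q \<theta> r s \<le> (\<Sum>s'\<in>UNIV. dl_weight p Q \<theta> r s')"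
    by (rule member_le_sum) (auto simp: w_nonneg)
  with w show ?thesis unfolding dl_model_def by simp
qed

lemma model_sum: "(\<Sum>s\<in>UNIV. dl_model p Q \<theta> r s) \<le> 1"
  unfolding dl_model_def sum_divide_distrib[symmetric]
  by (cases "(\<Sum>s'\<in>UNIV. dl_weight p Q \<theta> r s') = 0") simp_all

lemma model_zero: "phat p Q s r = 0 \<Longrightarrow> dl_model p Q \<theta> r s = 0"
  unfolding dl_model_def dlw by simp

lemma model1: "dl_model p Q 1 r s = cond (phat p Q) s r"
proof -
  have "dl_weight p Q 1 r s = phat p Q s r" for s
    unfolding dlw using pS_pos[of s] ph_nonneg[of s r] by simp
  then show ?thesis unfolding dl_model_def cond_def by simp
qed

lemma obj1: "dl_obj p Q 1 = dI_D p Q"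
  unfolding dl_obj_def dI_D_def model1 ..

lemma gibbs: "(\<Sum>s\<in>UNIV. \<Sum>r\<in>UNIV. p s r * (dl_model p Q \<theta> r s / cond (phat p Q) s r)) \<le> 1"
proof -
  define colh where "colh r = (\<Sum>s'\<in>UNIV. phat p Q s' r)" for r
  have step1: "(\<Sum>r\<in>UNIV. p s r * (dl_model p Q \<theta> r s / cond (phat p Q) s r))
      = (\<Sum>r\<in>UNIV. phat p Q s r * (dl_model p Q \<theta> r s / cond (phat p Q) s r))" for s
  proof (rule T)
    fix a b :: 'r assume e: "Q a = Q b"
    show "dl_model p Q \<theta> a s / cond (phat p Q) s a = dl_model p Q \<theta> b s / cond (phat p Q) s b"
      using model_inv[OF e] cond_ph_inv[OF e] by simp
  qed
  have step2: "phat p Q s r * (dl_model p Q \<theta> r s / cond (phat p Q) s r) = colh r * dl_model p Q \<theta> r s" for s r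
  proof (cases "phat p Q s r = 0")
    case True then show ?thesis using model_zero by simp
  next
    case False
    then have a: "0 < phat p Q s r" using ph_nonneg[of s r] by simp
    have c: "0 < colh r" unfolding colh_def by (rule colh_pos[OF a])
    show ?thesis using a c unfolding cond_def colh_def[symmetric] by (simp add: field_simps)
  qed
  have "(\<Sum>s\<in>UNIV. \<Sum>r\<in>UNIV. p s r * (dl_model p Q \<theta> r s / cond (phat p Q) s r))
      = (\<Sum>s\<in>UNIV. \<Sum>r\<in>UNIV. colh r * dl_model p Q \<theta> r s)"
    using step1 step2 by simp
  also have "\<dots> = (\<Sum>r\<in>UNIV. colh r * (\<Sum>s\<in>UNIV. dl_model p Q \<theta> r s))"
    by (subst sum.swap) (simp add: sum_distrib_left)
  also have "\<dots> \<le> (\<Sum>r\<in>UNIV. colh r * 1)"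
    by (rule sum_mono, rule mult_left_mono) (auto simp: model_sum colh_def ph_nonneg intro: sum_nonneg)
  also have "\<dots> = (\<Sum>s\<in>UNIV. margS (phat p Q) s)"
    unfolding colh_def margS_def by (subst sum.swap) simp
  also have "\<dots> = (\<Sum>s\<in>UNIV. margS p s)" by (simp add: margS_ph)
  also have "\<dots> = 1" using p_sum by (simp add: margS_def)
  finally show ?thesis .
qed

lemma term_ge: "(if p s r = 0 then 0 else p s r * ln (cond p s r / dl_model p Q \<theta> r s))
   \<ge> (if p s r = 0 then 0 else p s r * ln (cond p s r / dl_model p Q 1 r s))
     + p s r - p s r * (dl_model p Q \<theta> r s / cond (phat p Q) s r)"
proof (cases "p s r = 0")
  case True then show ?thesis by simp
next
  case False
  then have a: "0 < p s r" using p_nonneg[of s r] by simp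
  have cp: "0 < cond p s r" by (rule cp_pos[OF a])
  have m: "0 < dl_model p Q \<theta> r s" by (rule model_pos[OF a])
  have h: "0 < cond (phat p Q) s r" by (rule ch_pos[OF ph_pos[OF a]])
  have l1: "ln (cond p s r / dl_model p Q \<theta> r s) = ln (cond p s r) - ln (dl_model p Q \<theta> r s)"
    using cp m by (rule ln_divide_pos)
  have l2: "ln (cond p s r / cond (phat p Q) s r) = ln (cond p s r) - ln (cond (phat p Q) s r)"
    using cp h by (rule ln_divide_pos)
  have l3: "ln (dl_model p Q \<theta> r s / cond (phat p Q) s r) = ln (dl_model p Q \<theta> r s) - ln (cond (phat p Q) s r)"
    using m h by (rule ln_divide_pos)
  have l4: "ln (dl_model p Q \<theta> r s / cond (phat p Q) s r) \<le> dl_model p Q \<theta> r s / cond (phat p Q) s r - 1"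
    using m h by (intro ln_le_minus_one) simp
  have "ln (cond p s r / dl_model p Q \<theta> r s) \<ge> ln (cond p s r / cond (phat p Q) s r) + 1 - dl_model p Q \<theta> r s / cond (phat p Q) s r"
    using l1 l2 l3 l4 by linarith
  then have "p s r * ln (cond p s r / dl_model p Q \<theta> r s) \<ge> p s r * (ln (cond p s r / cond (phat p Q) s r) + 1 - dl_model p Q \<theta> r s / cond (phat p Q) s r)"
    using a by (intro mult_left_mono) auto
  then show ?thesis using False by (simp add: model1 algebra_simps)
qed

lemma obj_ge: "dl_obj p Q 1 \<le> dl_obj p Q \<theta>"
proof -
  define X where "X = (\<Sum>s\<in>UNIV. \<Sum>r\<in>UNIV. (if p s r = 0 then 0 else p s r * ln (cond p s r / dl_model p Q 1 r s))
     + p s r - p s r * (dl_model p Q \<theta> r s / cond (phat p Q) s r))"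
  have "X \<le> dl_obj p Q \<theta>"
    unfolding dl_obj_def X_def by (intro sum_mono term_ge)
  moreover have "X = dl_obj p Q 1 + 1 - (\<Sum>s\<in>UNIV. \<Sum>r\<in>UNIV. p s r * (dl_model p Q \<theta> r s / cond (phat p Q) s r))"
    unfolding dl_obj_def X_def using p_sum by (simp only: sum.distrib sum_subtractf)
  ultimately show ?thesis using gibbs[of \<theta>] by linarith
qed

lemma DL: "dI_DL p Q = dl_obj p Q 1"
  unfolding dI_DL_def by (rule cInf_eq_minimum) (auto simp: obj_ge)

end

theorem theorem6:
  fixes p :: "'s::{finite,linorder} \<Rightarrow> 'r::finite \<Rightarrow> real"
    and Q :: "'r \<Rightarrow> 'r \<Rightarrow> real"
    and g :: "'r \<Rightarrow> 'b"
  assumes p_nonneg: "\<forall>s r. 0 \<le> p s r"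
    and p_sum: "(\<Sum>s\<in>UNIV. \<Sum>r\<in>UNIV. p s r) = 1"
    and pS_pos: "\<forall>s. 0 < margS p s"
    and Q_nonneg: "\<forall>r rh. 0 \<le> Q r rh"
    and Q_rows: "\<forall>r. (\<Sum>rh\<in>UNIV. Q r rh) = 1"
    and Q_idem: "\<forall>r rh. (\<Sum>r'\<in>UNIV. Q r r' * Q r' rh) = Q r rh"
    and Q_diag: "\<forall>r. 0 < Q r r"
    and g_info: "mi_on (range g) (push (phat p Q) g) = mi_on UNIV (phat p Q)"
  shows
    "(let ph = phat p Q;
          IR = mi_on UNIV p;
          dI_hat = IR - mi_on UNIV ph;
          dI_bar = IR - mi_on (range g) (push ph g);
          dI_sorted = IR - mi_on (range (slist ph)) (push ph (slist ph));
          dI_LS = IR - mi_on (range (slist ph)) (push p (slist ph));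
          dI_dec = IR - mi_on (range (dec ph)) (push ph (dec ph));
          dI_B = IR - mi_on (range (dec ph)) (push p (dec ph));
          dA = acc p (dec p) - acc ph (dec ph);
          dA_B = acc p (dec p) - acc p (dec ph)
      in dI_hat = dI_bar \<and> dI_bar = dI_D p Q \<and> dI_D p Q = dI_DL p Q
         \<and> (\<exists>\<theta>. dl_obj p Q \<theta> = dI_DL p Q) \<and> (\<forall>\<theta>. dI_DL p Q \<le> dl_obj p Q \<theta>)
         \<and> dI_sorted = dI_LS \<and> dI_dec = dI_B \<and> dA = dA_B)"
  proof -
  interpret setup2 Q p using assms by unfold_locales auto
  have e1: "mi_on UNIV p - mi_on UNIV (phat p Q) = dI_D p Q" by (rule dI_main)
  have e2: "push (phat p Q) (slist (phat p Q)) = push p (slist (phat p Q))"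
    by (rule push_eq) (rule slist_inv)
  have e3: "push (phat p Q) (dec (phat p Q)) = push p (dec (phat p Q))"
    by (rule push_eq) (rule dec_inv)
  have e4: "acc (phat p Q) (dec (phat p Q)) = acc p (dec (phat p Q))"
    unfolding acc_def e3 by (simp add: margS_ph)
  have e5: "dI_D p Q = dI_DL p Q" using DL obj1 by simp
  have e6: "\<exists>\<theta>. dl_obj p Q \<theta> = dI_DL p Q" using DL by (intro exI[of _ 1]) simp
  have e7: "\<forall>\<theta>. dI_DL p Q \<le> dl_obj p Q \<theta>" using DL obj_ge by simp
  show ?thesis unfolding Let_def using e1 e5 e6 e7 g_info by (simp add: e2 e3 e4)
qed

end
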